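(* Let $A\in\mathbb{R}^{n\times n}$, $C\in\mathbb{R}^{p\times n}$ and $s\in\mathbb{N}$. If $(A,C)$ is not $s$-sparse detectable, then for every $v\in\mathbb{N}$ and every matrix $D\in\mathbb{R}^{v\times p}$, $(A,C)$ is not $s$-sparse detectable with respect to $D$.
   Context: A pair $(A,M)$ is detectable if every eigenvalue of $A$ of modulus $\ge1$ is observable, i.e. $Mw\ne0$ for every (complex) eigenvector $w$ of $A$ whose eigenvalue has modulus $\ge 1$. Let $\mathbf{E}_p=\{\mathbf{e}_1,\dots,\mathbf{e}_p\}$ be the standard basis of $\mathbb{R}^p$. For $D\in\mathbb{R}^{v\times p}$ and $k\in\mathbb{N}$, let $\mathbf{P}_k(D)$ be the set of all real matrices $L$ with $v$ columns (any number of rows) such that $\ker(L)=D(\mathrm{span}\,V)$ for some $V\subseteq\mathbf{E}_p$ with $|V|\le k$. $(A,C)$ is $k$-sparse detectable with respect to $D$ if $(A,LDC)$ is detectable for every $L\in\mathbf{P}_k(D)$; $(A,C)$ is $k$-sparse detectable if it is $k$-sparse detectable with respect to $I_p$. *)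

theory Defs
  imports "Jordan_Normal_Form.Matrix"
begin

definition cmat :: "real mat \<Rightarrow> complex mat" where
  "cmat M = map_mat complex_of_real M"

definition detectable :: "real mat \<Rightarrow> real mat \<Rightarrow> bool" where
  "detectable A M \<longleftrightarrow>
     (\<forall>(w :: complex vec) (lam :: complex).
        w \<in> carrier_vec (dim_row A) \<and> w \<noteq> 0\<^sub>v (dim_row A) \<and>
        cmat A *\<^sub>v w = lam \<cdot>\<^sub>v w \<and> cmod lam \<ge> 1
        \<longrightarrow> cmat M *\<^sub>v w \<noteq> 0\<^sub>v (dim_row M))"

text \<open>D (span V) for V a set of standard basis vectors of R^p, given by its index set
  I \<subseteq> {0..<p}: span of {e_i | i \<in> I} is the set of vectors in R^p supported on I.\<close>
definition image_span_basis :: "real mat \<Rightarrow> nat set \<Rightarrow> real vec set" where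
  "image_span_basis D I =
     {D *\<^sub>v y | y. y \<in> carrier_vec (dim_col D) \<and> (\<forall>i < dim_col D. i \<notin> I \<longrightarrow> y $ i = 0)}"

definition mat_kernel :: "real mat \<Rightarrow> real vec set" where
  "mat_kernel L = {x \<in> carrier_vec (dim_col L). L *\<^sub>v x = 0\<^sub>v (dim_row L)}"

definition Pk :: "nat \<Rightarrow> real mat \<Rightarrow> real mat set" where
  "Pk k D = {L. dim_col L = dim_row D \<and>
     (\<exists>I. I \<subseteq> {0..<dim_col D} \<and> card I \<le> k \<and> mat_kernel L = image_span_basis D I)}"

definition sparse_detectable_wrt :: "nat \<Rightarrow> real mat \<Rightarrow> real mat \<Rightarrow> real mat \<Rightarrow> bool" where
  "sparse_detectable_wrt k A C D \<longleftrightarrow> (\<forall>L \<in> Pk k D. detectable A (L * D * C))"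

definition sparse_detectable :: "nat \<Rightarrow> real mat \<Rightarrow> real mat \<Rightarrow> bool" where
  "sparse_detectable k A C \<longleftrightarrow> sparse_detectable_wrt k A C (1\<^sub>m (dim_row C))"

end

theory Submission imports Defs begin

lemma self_sp_nz:
  fixes u :: "real vec"
  assumes u: "u \<in> carrier_vec r" and nz: "u \<noteq> 0\<^sub>v r"
  shows "u \<bullet> u \<noteq> 0"
proof
  assume h: "u \<bullet> u = 0"
  have "(\<Sum>i\<in>{0..<r}. u$i * u$i) = 0" using h u by (simp add: scalar_prod_def)
  hence "\<forall>i\<in>{0..<r}. u$i * u$i = 0" by (subst sum_nonneg_eq_0_iff[symmetric]) auto
  hence "u = 0\<^sub>v r" using u by (intro eq_vecI) auto
  thus False using nz by simp
qed

definition projP :: "nat \<Rightarrow> real vec \<Rightarrow> real mat" where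
  "projP r u = mat r r (\<lambda>(i,j). (if i = j then u \<bullet> u else 0) - u$i * u$j)"

lemma projP_mult:
  assumes u: "u \<in> carrier_vec r" and y: "y \<in> carrier_vec r"
  shows "projP r u *\<^sub>v y = (u \<bullet> u) \<cdot>\<^sub>v y - (u \<bullet> y) \<cdot>\<^sub>v u"
proof (rule eq_vecI)
  fix i assume i: "i < dim_vec ((u \<bullet> u) \<cdot>\<^sub>v y - (u \<bullet> y) \<cdot>\<^sub>v u)"
  hence i: "i < r" using u y by simp
  have "(projP r u *\<^sub>v y) $ i = (\<Sum>j\<in>{0..<r}. ((if i = j then u \<bullet> u else 0) - u$i * u$j) * y$j)"
    using i y by (simp add: projP_def mult_mat_vec_def scalar_prod_def)
  also have "\<dots> = (\<Sum>j\<in>{0..<r}. (if i = j then u \<bullet> u else 0) * y$j) - u$i * (\<Sum>j\<in>{0..<r}. u$j * y$j)"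
    by (simp add: left_diff_distrib sum_subtractf sum_distrib_left mult.assoc)
  also have "(\<Sum>j\<in>{0..<r}. (if i = j then u \<bullet> u else 0) * y$j) = (\<Sum>j\<in>{0..<r}. if i = j then (u \<bullet> u) * y$j else 0)"
    by (rule sum.cong) auto
  also have "\<dots> = (u \<bullet> u) * y$i" using i by simp
  also have "(\<Sum>j\<in>{0..<r}. u$j * y$j) = u \<bullet> y" using y by (simp add: scalar_prod_def)
  finally show "(projP r u *\<^sub>v y) $ i = ((u \<bullet> u) \<cdot>\<^sub>v y - (u \<bullet> y) \<cdot>\<^sub>v u) $ i"
    using i u y by simp
qed (use u y in \<open>simp add: projP_def\<close>)

lemma projP_carrier: "projP r u \<in> carrier_mat r r" by (simp add: projP_def)

lemma kernel_extend:
  fixes L :: "real mat"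
  assumes L: "L \<in> carrier_mat r v" and d: "d \<in> carrier_vec v"
  shows "\<exists>L' r'. L' \<in> carrier_mat r' v \<and>
    mat_kernel L' = {y + c \<cdot>\<^sub>v d | y c. y \<in> mat_kernel L}"
proof (cases "L *\<^sub>v d = 0\<^sub>v r")
  case True
  have "mat_kernel L = {y + c \<cdot>\<^sub>v d | y c. y \<in> mat_kernel L}"
  proof (rule Set.set_eqI, rule iffI)
    fix x assume "x \<in> mat_kernel L"
    hence "x = x + 0 \<cdot>\<^sub>v d \<and> x \<in> mat_kernel L" unfolding mat_kernel_def using L d by auto
    thus "x \<in> {y + c \<cdot>\<^sub>v d | y c. y \<in> mat_kernel L}" by blast
  next
    fix x assume "x \<in> {y + c \<cdot>\<^sub>v d | y c. y \<in> mat_kernel L}"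
    then obtain y c where x: "x = y + c \<cdot>\<^sub>v d" and y: "y \<in> carrier_vec v" "L *\<^sub>v y = 0\<^sub>v r"
      unfolding mat_kernel_def using L by auto
    have "L *\<^sub>v x = L *\<^sub>v y + c \<cdot>\<^sub>v (L *\<^sub>v d)"
      unfolding x using L y d by (simp add: mult_add_distrib_mat_vec mult_mat_vec)
    also have "\<dots> = 0\<^sub>v r" using True y by (auto intro!: eq_vecI)
    finally show "x \<in> mat_kernel L" unfolding mat_kernel_def using x y d L by auto
  qed
  thus ?thesis using L by blast
next
  case False
  define u where "u = L *\<^sub>v d"
  have u: "u \<in> carrier_vec r" using L d u_def by simp
  have uu: "u \<bullet> u \<noteq> 0" using self_sp_nz[OF u] False u_def by simp
  define L' where "L' = projP r u * L"
  have L': "L' \<in> carrier_mat r v" using mult_carrier_mat[OF projP_carrier L] unfolding L'_def by simp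
  have L'x: "L' *\<^sub>v x = (u \<bullet> u) \<cdot>\<^sub>v (L *\<^sub>v x) - (u \<bullet> (L *\<^sub>v x)) \<cdot>\<^sub>v u"
    if x: "x \<in> carrier_vec v" for x
    unfolding L'_def using x L u projP_carrier[of r u]
    by (simp add: projP_mult[OF u])
  have "mat_kernel L' = {y + c \<cdot>\<^sub>v d | y c. y \<in> mat_kernel L}"
  proof (rule Set.set_eqI, rule iffI)
    fix x assume "x \<in> mat_kernel L'"
    hence x: "x \<in> carrier_vec v" and "L' *\<^sub>v x = 0\<^sub>v r" unfolding mat_kernel_def using L' by auto
    hence eq: "(u \<bullet> u) \<cdot>\<^sub>v (L *\<^sub>v x) - (u \<bullet> (L *\<^sub>v x)) \<cdot>\<^sub>v u = 0\<^sub>v r" using L'x by simp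
    define c where "c = (u \<bullet> (L *\<^sub>v x)) / (u \<bullet> u)"
    have Lx: "L *\<^sub>v x = c \<cdot>\<^sub>v u"
    proof (rule eq_vecI)
      fix i assume "i < dim_vec (c \<cdot>\<^sub>v u)"
      hence i: "i < r" using u by simp
      have "((u \<bullet> u) \<cdot>\<^sub>v (L *\<^sub>v x) - (u \<bullet> (L *\<^sub>v x)) \<cdot>\<^sub>v u) $ i = 0"
        using eq i by simp
      hence "(u \<bullet> u) * (L *\<^sub>v x) $ i = (u \<bullet> (L *\<^sub>v x)) * u $ i"
        using i L u x by simp
      thus "(L *\<^sub>v x) $ i = (c \<cdot>\<^sub>v u) $ i" using i u uu unfolding c_def
        by (simp add: field_simps)
    qed (use L u in simp)
    define y where "y = x - c \<cdot>\<^sub>v d"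
    have y: "y \<in> carrier_vec v" using x d y_def by simp
    have "L *\<^sub>v y = L *\<^sub>v x - c \<cdot>\<^sub>v u"
      unfolding y_def u_def using L x d by (simp add: mult_minus_distrib_mat_vec mult_mat_vec)
    also have "\<dots> = 0\<^sub>v r" unfolding Lx using u by simp
    finally have "y \<in> mat_kernel L" using y L unfolding mat_kernel_def by simp
    moreover have "x = y + c \<cdot>\<^sub>v d" unfolding y_def using x d by auto
    ultimately show "x \<in> {y + c \<cdot>\<^sub>v d | y c. y \<in> mat_kernel L}" by blast
  next
    fix x assume "x \<in> {y + c \<cdot>\<^sub>v d | y c. y \<in> mat_kernel L}"
    then obtain y c where x: "x = y + c \<cdot>\<^sub>v d" and y: "y \<in> carrier_vec v" "L *\<^sub>v y = 0\<^sub>v r"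
      unfolding mat_kernel_def using L by auto
    have xc: "x \<in> carrier_vec v" using x y d by simp
    have "L *\<^sub>v x = L *\<^sub>v y + c \<cdot>\<^sub>v u"
      unfolding x u_def using L y d by (simp add: mult_add_distrib_mat_vec mult_mat_vec)
    also have "\<dots> = c \<cdot>\<^sub>v u" using y u by simp
    finally have Lx: "L *\<^sub>v x = c \<cdot>\<^sub>v u" .
    have "L' *\<^sub>v x = 0\<^sub>v r"
      unfolding L'x[OF xc] Lx
    proof (rule eq_vecI)
      fix i assume "i < dim_vec (0\<^sub>v r :: real vec)"
      hence i: "i < r" by simp
      have "u \<bullet> (c \<cdot>\<^sub>v u) = c * (u \<bullet> u)" using u by simp
      thus "((u \<bullet> u) \<cdot>\<^sub>v (c \<cdot>\<^sub>v u) - (u \<bullet> (c \<cdot>\<^sub>v u)) \<cdot>\<^sub>v u) $ i = 0\<^sub>v r $ i"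
        using i u by simp
    qed (use u in simp)
    thus "x \<in> mat_kernel L'" using xc L' unfolding mat_kernel_def by simp
  qed
  thus ?thesis using L' by blast
qed

lemma image_span_insert:
  fixes D :: "real mat"
  assumes D: "D \<in> carrier_mat v p" and j: "j < p"
  shows "image_span_basis D (insert j I) = {y + c \<cdot>\<^sub>v col D j | y c. y \<in> image_span_basis D I}"
proof (rule Set.set_eqI, rule iffI)
  fix x assume "x \<in> image_span_basis D (insert j I)"
  then obtain z where x: "x = D *\<^sub>v z" and z: "z \<in> carrier_vec p"
    and zs: "\<forall>i < p. i \<notin> insert j I \<longrightarrow> z $ i = 0"
    unfolding image_span_basis_def using D by auto
  define z' where "z' = vec p (\<lambda>i. if i = j then 0 else z $ i)"
  have z': "z' \<in> carrier_vec p" unfolding z'_def by simp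
  have zz: "z = z' + (z $ j) \<cdot>\<^sub>v unit_vec p j"
    by (rule eq_vecI) (use z j in \<open>auto simp: z'_def unit_vec_def\<close>)
  have "x = D *\<^sub>v z' + (z $ j) \<cdot>\<^sub>v (D *\<^sub>v unit_vec p j)"
    unfolding x using D z' j by (subst zz) (simp add: mult_add_distrib_mat_vec mult_mat_vec)
  also have "D *\<^sub>v unit_vec p j = col D j" using D j by (intro eq_vecI) (auto simp: col_def)
  finally have x2: "x = D *\<^sub>v z' + (z $ j) \<cdot>\<^sub>v col D j" .
  have "D *\<^sub>v z' \<in> image_span_basis D I"
    unfolding image_span_basis_def using D z' zs by (auto simp: z'_def)
  thus "x \<in> {y + c \<cdot>\<^sub>v col D j | y c. y \<in> image_span_basis D I}" using x2 by blast
next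
  fix x assume "x \<in> {y + c \<cdot>\<^sub>v col D j | y c. y \<in> image_span_basis D I}"
  then obtain z c where x: "x = D *\<^sub>v z + c \<cdot>\<^sub>v col D j" and z: "z \<in> carrier_vec p"
    and zs: "\<forall>i < p. i \<notin> I \<longrightarrow> z $ i = 0"
    unfolding image_span_basis_def using D by auto
  define z' where "z' = z + c \<cdot>\<^sub>v unit_vec p j"
  have z': "z' \<in> carrier_vec p" unfolding z'_def using z by simp
  have "D *\<^sub>v z' = D *\<^sub>v z + c \<cdot>\<^sub>v (D *\<^sub>v unit_vec p j)"
    unfolding z'_def using D z j by (simp add: mult_add_distrib_mat_vec mult_mat_vec)
  also have "D *\<^sub>v unit_vec p j = col D j" using D j by (intro eq_vecI) (auto simp: col_def)
  finally have "x = D *\<^sub>v z'" using x by simp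
  moreover have "\<forall>i < p. i \<notin> insert j I \<longrightarrow> z' $ i = 0"
    using zs z unfolding z'_def by (auto simp: unit_vec_def)
  ultimately show "x \<in> image_span_basis D (insert j I)"
    unfolding image_span_basis_def using D z' by auto
qed

lemma image_span_insert_big:
  fixes D :: "real mat"
  assumes D: "D \<in> carrier_mat v p" and j: "\<not> j < p"
  shows "image_span_basis D (insert j I) = image_span_basis D I"
  unfolding image_span_basis_def using D j by auto

lemma kernel_exists:
  fixes D :: "real mat"
  assumes D: "D \<in> carrier_mat v p" and fin: "finite I"
  shows "\<exists>L r. L \<in> carrier_mat r v \<and> mat_kernel L = image_span_basis D I"
  using fin
proof (induction I rule: finite_induct)
  case empty
  have "mat_kernel (1\<^sub>m v :: real mat) = image_span_basis D {}"
  proof (rule Set.set_eqI, rule iffI)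
    fix x assume "x \<in> mat_kernel (1\<^sub>m v :: real mat)"
    hence "x = D *\<^sub>v 0\<^sub>v p" unfolding mat_kernel_def using D by auto
    thus "x \<in> image_span_basis D {}" unfolding image_span_basis_def using D by auto
  next
    fix x assume "x \<in> image_span_basis D {}"
    then obtain z where x: "x = D *\<^sub>v z" and z: "z \<in> carrier_vec p"
      and zs: "\<forall>i < p. z $ i = 0"
      unfolding image_span_basis_def using D by auto
    have "z = 0\<^sub>v p" using z zs by (intro eq_vecI) auto
    hence "x = 0\<^sub>v v" using x D by (auto intro!: eq_vecI)
    thus "x \<in> mat_kernel (1\<^sub>m v :: real mat)" unfolding mat_kernel_def by simp
  qed
  thus ?case by (intro exI[of _ "1\<^sub>m v"] exI[of _ v]) simp
next
  case (insert j I)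
  then obtain L r where L: "L \<in> carrier_mat r v" and K: "mat_kernel L = image_span_basis D I" by blast
  show ?case
  proof (cases "j < p")
    case True
    have "col D j \<in> carrier_vec v" using D True by simp
    from kernel_extend[OF L this] show ?thesis
      unfolding image_span_insert[OF D True] K .
  next
    case False
    show ?thesis unfolding image_span_insert_big[OF D False] using L K by blast
  qed
qed

definition rev_c :: "complex vec \<Rightarrow> real vec" where "rev_c z = map_vec Re z"
definition imv_c :: "complex vec \<Rightarrow> real vec" where "imv_c z = map_vec Im z"

lemma cmat_re:
  fixes M :: "real mat"
  assumes w: "w \<in> carrier_vec (dim_col M)"
  shows "rev_c (cmat M *\<^sub>v w) = M *\<^sub>v rev_c w"
  by (rule eq_vecI) (use w in \<open>auto simp: rev_c_def cmat_def mult_mat_vec_def scalar_prod_def Re_sum\<close>)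

lemma cmat_im:
  fixes M :: "real mat"
  assumes w: "w \<in> carrier_vec (dim_col M)"
  shows "imv_c (cmat M *\<^sub>v w) = M *\<^sub>v imv_c w"
  by (rule eq_vecI) (use w in \<open>auto simp: imv_c_def cmat_def mult_mat_vec_def scalar_prod_def Im_sum\<close>)

lemma cvec_zero:
  assumes "z \<in> carrier_vec k" "rev_c z = 0\<^sub>v k" "imv_c z = 0\<^sub>v k"
  shows "z = 0\<^sub>v k"
proof (rule eq_vecI)
  fix i assume "i < dim_vec (0\<^sub>v k :: complex vec)"
  hence i: "i < k" by simp
  have "Re (z $ i) = 0" "Im (z $ i) = 0"
    using arg_cong[OF assms(2), of "\<lambda>x. x $ i"] arg_cong[OF assms(3), of "\<lambda>x. x $ i"] i assms(1)
    by (auto simp: rev_c_def imv_c_def)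
  thus "z $ i = 0\<^sub>v k $ i" using i by (simp add: complex_eqI)
qed (use assms in simp)

lemma cvec_zero_parts:
  assumes "z = 0\<^sub>v k"
  shows "rev_c z = 0\<^sub>v k" "imv_c z = 0\<^sub>v k"
  using assms by (auto simp: rev_c_def imv_c_def)

lemma transfer_kernel:
  fixes L L' C D :: "real mat" and x :: "real vec"
  assumes L: "L \<in> carrier_mat r p" and L': "L' \<in> carrier_mat r' v"
    and C: "C \<in> carrier_mat p n" and D: "D \<in> carrier_mat v p" and x: "x \<in> carrier_vec n"
    and K: "mat_kernel L = image_span_basis (1\<^sub>m p) I"
    and K': "mat_kernel L' = image_span_basis D I"
    and z: "(L * 1\<^sub>m p * C) *\<^sub>v x = 0\<^sub>v r"
  shows "(L' * D * C) *\<^sub>v x = 0\<^sub>v r'"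
proof -
  have Cx: "C *\<^sub>v x \<in> carrier_vec p" using C x by simp
  have "L * 1\<^sub>m p = L" using L by simp
  hence "L *\<^sub>v (C *\<^sub>v x) = 0\<^sub>v r" using z L C x by simp
  hence "C *\<^sub>v x \<in> mat_kernel L" unfolding mat_kernel_def using L Cx by simp
  then obtain y where y: "C *\<^sub>v x = 1\<^sub>m p *\<^sub>v y" "y \<in> carrier_vec p"
     "\<forall>i < p. i \<notin> I \<longrightarrow> y $ i = 0"
    unfolding K image_span_basis_def by auto
  have "C *\<^sub>v x = y" using y by simp
  hence "D *\<^sub>v (C *\<^sub>v x) \<in> image_span_basis D I"
    unfolding image_span_basis_def using y D by auto
  hence "L' *\<^sub>v (D *\<^sub>v (C *\<^sub>v x)) = 0\<^sub>v r'" unfolding K'[symmetric] mat_kernel_def using L' by simp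
  have DC: "D * C \<in> carrier_mat v n" using mult_carrier_mat[OF D C] .
  have "(L' * D * C) *\<^sub>v x = L' *\<^sub>v (D *\<^sub>v (C *\<^sub>v x))"
    using assoc_mult_mat_vec[OF mult_carrier_mat[OF L' D] C x]
      assoc_mult_mat_vec[OF L' D Cx] by simp
  thus ?thesis using \<open>L' *\<^sub>v (D *\<^sub>v (C *\<^sub>v x)) = 0\<^sub>v r'\<close> by simp
qed

theorem lemma1:
  fixes A C :: "real mat" and n p s :: nat
  assumes "A \<in> carrier_mat n n" and "C \<in> carrier_mat p n"
    and "\<not> sparse_detectable s A C"
  shows "\<forall>(v::nat) (D::real mat). D \<in> carrier_mat v p \<longrightarrow> \<not> sparse_detectable_wrt s A C D"
proof (intro allI impI)
  fix v and D :: "real mat"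
  assume D: "D \<in> carrier_mat v p"
  have A: "A \<in> carrier_mat n n" and C: "C \<in> carrier_mat p n" by fact+
  from assms(3) obtain L where LP: "L \<in> Pk s (1\<^sub>m p)" and nd: "\<not> detectable A (L * 1\<^sub>m p * C)"
    unfolding sparse_detectable_def sparse_detectable_wrt_def using C by auto
  from LP obtain I where Lc: "dim_col L = p" and I: "I \<subseteq> {0..<p}" "card I \<le> s"
    and K: "mat_kernel L = image_span_basis (1\<^sub>m p) I"
    unfolding Pk_def by auto
  have L: "L \<in> carrier_mat (dim_row L) p" using Lc by auto
  from nd obtain w lam where w: "w \<in> carrier_vec n" "w \<noteq> 0\<^sub>v n" "cmat A *\<^sub>v w = lam \<cdot>\<^sub>v w" "cmod lam \<ge> 1"
    and z: "cmat (L * 1\<^sub>m p * C) *\<^sub>v w = 0\<^sub>v (dim_row L)"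
    unfolding detectable_def using A by auto
  have fin: "finite I" using I finite_subset by blast
  obtain L' r' where L': "L' \<in> carrier_mat r' v" and K': "mat_kernel L' = image_span_basis D I"
    using kernel_exists[OF D fin] by blast
  have L'P: "L' \<in> Pk s D" unfolding Pk_def using L' D I K' by auto
  have M: "L * 1\<^sub>m p * C \<in> carrier_mat (dim_row L) n"
    using mult_carrier_mat[OF mult_carrier_mat[OF L one_carrier_mat] C] .
  have M': "L' * D * C \<in> carrier_mat r' n"
    using mult_carrier_mat[OF mult_carrier_mat[OF L' D] C] .
  have wM: "w \<in> carrier_vec (dim_col (L * 1\<^sub>m p * C))" using M w(1) carrier_matD(2)[OF M] by metis
  have wM': "w \<in> carrier_vec (dim_col (L' * D * C))" using M' w(1) carrier_matD(2)[OF M'] by metis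
  have z1: "(L * 1\<^sub>m p * C) *\<^sub>v rev_c w = 0\<^sub>v (dim_row L)"
    using cmat_re[OF wM] cvec_zero_parts(1)[OF z] by metis
  have "rev_c w \<in> carrier_vec n" using w(1) by (simp add: rev_c_def)
  from transfer_kernel[OF L L' C D this K K' z1]
  have re: "(L' * D * C) *\<^sub>v rev_c w = 0\<^sub>v r'" .
  have z2: "(L * 1\<^sub>m p * C) *\<^sub>v imv_c w = 0\<^sub>v (dim_row L)"
    using cmat_im[OF wM] cvec_zero_parts(2)[OF z] by metis
  have "imv_c w \<in> carrier_vec n" using w(1) by (simp add: imv_c_def)
  from transfer_kernel[OF L L' C D this K K' z2]
  have im: "(L' * D * C) *\<^sub>v imv_c w = 0\<^sub>v r'" .
  have "dim_row (cmat (L' * D * C)) = r'" using carrier_matD(1)[OF M'] by (simp add: cmat_def)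
  hence cc: "cmat (L' * D * C) *\<^sub>v w \<in> carrier_vec r'" by (intro carrier_vecI) simp
  have zz: "cmat (L' * D * C) *\<^sub>v w = 0\<^sub>v r'"
    by (rule cvec_zero[OF cc]) (unfold cmat_re[OF wM'] cmat_im[OF wM'], rule re, rule im)
  have dA: "dim_row A = n" using carrier_matD(1)[OF A] .
  have dM: "dim_row (L' * D * C) = r'" using carrier_matD(1)[OF M'] .
  have "\<not> detectable A (L' * D * C)"
    unfolding detectable_def dA dM using w zz by blast
  thus "\<not> sparse_detectable_wrt s A C D"
    unfolding sparse_detectable_wrt_def using L'P by auto
qed

end
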